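(* Every $3$-januarial is of simple type; that is, its common graph $\Upsilon$ is a union of pairwise disjoint simple circuits.
   Context: Let $\Delta(2,3,\ell)=\langle x,y:x^2=y^3=(xy)^\ell=1\rangle$, acting on a finite set $S$. The coset graph has: - vertex set $S$; - an undirected $x$-edge joining each pair of points transposed by $x$; - a directed $y$-edge $u\to uy$. It is $2$-cell embedded in a closed orientable surface via the rotation system (incoming $y$-edge, outgoing $y$-edge, $x$-edge) at each vertex. The faces are $y$-faces and $xy$-faces; this is the coset diagram. A $3$-januarial is the coset diagram of such an action, for some $\ell$, in which $\langle xy\rangle$ has exactly two orbits, each of size $|S|/2$. Let $S_1,S_2$ be the closures of its two $xy$-faces. Collapsing each $y$-face to a point gives the companion diagram, with images $S_i'$ of $S_i$. The common graph is $\Upsilon=S_1'\cap S_2'$. A januarial is of simple type if $\Upsilon$ consists of pairwise disjoint simple circuits. *)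

theory Defs
  imports "HOL-Combinatorics.Permutations"
begin

text \<open>Right actions: the point u acted on by the word g h is h (g u).
  The action of Delta(2,3,l) on S is given by the images x, y of the generators,
  which are permutations of S satisfying the defining relations.\<close>

definition orb :: "('a \<Rightarrow> 'a) \<Rightarrow> 'a \<Rightarrow> 'a set" where
  "orb f u = {(f ^^ n) u | n. True}"

definition xy_orbits :: "'a set \<Rightarrow> ('a \<Rightarrow> 'a) \<Rightarrow> ('a \<Rightarrow> 'a) \<Rightarrow> 'a set set" where
  "xy_orbits S x y = orb (y \<circ> x) ` S"

definition triangle_action :: "'a set \<Rightarrow> ('a \<Rightarrow> 'a) \<Rightarrow> ('a \<Rightarrow> 'a) \<Rightarrow> bool" where
  "triangle_action S x y \<longleftrightarrow> finite S \<and> x permutes S \<and> y permutes S \<and>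
     (\<forall>u\<in>S. x (x u) = u) \<and> (\<forall>u\<in>S. y (y (y u)) = u) \<and>
     (\<exists>l::nat. l \<ge> 1 \<and> (\<forall>u\<in>S. ((y \<circ> x) ^^ l) u = u))"

definition januarial3 :: "'a set \<Rightarrow> ('a \<Rightarrow> 'a) \<Rightarrow> ('a \<Rightarrow> 'a) \<Rightarrow> bool" where
  "januarial3 S x y \<longleftrightarrow> triangle_action S x y \<and>
     (\<exists>O1 O2. O1 \<noteq> O2 \<and> xy_orbits S x y = {O1, O2} \<and>
              2 * card O1 = card S \<and> 2 * card O2 = card S)"

text \<open>Companion diagram: vertices are the y-orbits (each y-face collapsed to a point);
  edges are the x-edges, represented as the sets {u, u x} with u x \<noteq> u;
  the edge {u, u x} joins the vertices containing u and u x.\<close>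
definition cvert :: "('a \<Rightarrow> 'a) \<Rightarrow> 'a \<Rightarrow> 'a set" where
  "cvert y u = orb y u"

definition joins :: "('a \<Rightarrow> 'a) \<Rightarrow> ('a \<Rightarrow> 'a) \<Rightarrow> 'a set \<Rightarrow> 'a set \<Rightarrow> 'a set \<Rightarrow> bool" where
  "joins x y e V W \<longleftrightarrow> (\<exists>u. e = {u, x u} \<and> x u \<noteq> u \<and>
      ((cvert y u = V \<and> cvert y (x u) = W) \<or> (cvert y u = W \<and> cvert y (x u) = V)))"

text \<open>Image S' in the companion diagram of the closure of the xy-face with orbit O.
  The boundary walk of this face is u, u x, u x y, ... (u in O): its vertices are
  the points of O and their x-images, its x-edges are {u, u x} for u in O, and its
  y-edges (collapsed in the companion diagram) are u x \<rightarrow> u x y.\<close>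
definition face_vertices :: "('a \<Rightarrow> 'a) \<Rightarrow> ('a \<Rightarrow> 'a) \<Rightarrow> 'a set \<Rightarrow> 'a set set" where
  "face_vertices x y F = cvert y ` (F \<union> x ` F)"

definition face_edges :: "('a \<Rightarrow> 'a) \<Rightarrow> 'a set \<Rightarrow> 'a set set" where
  "face_edges x F = {{u, x u} | u. u \<in> F \<and> x u \<noteq> u}"

definition common_vertices :: "('a \<Rightarrow> 'a) \<Rightarrow> ('a \<Rightarrow> 'a) \<Rightarrow> 'a set \<Rightarrow> 'a set \<Rightarrow> 'a set set" where
  "common_vertices x y O1 O2 = face_vertices x y O1 \<inter> face_vertices x y O2"

definition common_edges :: "('a \<Rightarrow> 'a) \<Rightarrow> 'a set \<Rightarrow> 'a set \<Rightarrow> 'a set set" where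
  "common_edges x O1 O2 = face_edges x O1 \<inter> face_edges x O2"

definition simple_circuit :: "('a \<Rightarrow> 'a) \<Rightarrow> ('a \<Rightarrow> 'a) \<Rightarrow> 'a set list \<times> 'a set list \<Rightarrow> bool" where
  "simple_circuit x y c \<longleftrightarrow> (case c of (vs, es) \<Rightarrow>
     length vs \<ge> 1 \<and> length es = length vs \<and> distinct vs \<and> distinct es \<and>
     (\<forall>i < length vs. joins x y (es ! i) (vs ! i) (vs ! (Suc i mod length vs))))"

definition disjoint_simple_circuits ::
  "('a \<Rightarrow> 'a) \<Rightarrow> ('a \<Rightarrow> 'a) \<Rightarrow> 'a set set \<Rightarrow> 'a set set \<Rightarrow> bool" where
  "disjoint_simple_circuits x y VS ES \<longleftrightarrow>
     (\<exists>C. (\<forall>c\<in>C. simple_circuit x y c) \<and>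
          (\<forall>c\<in>C. \<forall>d\<in>C. c \<noteq> d \<longrightarrow> set (fst c) \<inter> set (fst d) = {}) \<and>
          (\<Union>c\<in>C. set (fst c)) = VS \<and> (\<Union>c\<in>C. set (snd c)) = ES)"

definition simple_type :: "'a set \<Rightarrow> ('a \<Rightarrow> 'a) \<Rightarrow> ('a \<Rightarrow> 'a) \<Rightarrow> bool" where
  "simple_type S x y \<longleftrightarrow> (\<forall>O1 O2. O1 \<noteq> O2 \<and> xy_orbits S x y = {O1, O2} \<longrightarrow>
     disjoint_simple_circuits x y (common_vertices x y O1 O2) (common_edges x O1 O2))"

end

theory Submission
  imports Defs "HOL-Combinatorics.Orbits"
begin

locale jan =
  fixes S :: "'a set" and x y :: "'a \<Rightarrow> 'a" and O1 :: "'a set"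
  assumes fin: "finite S"
    and xp: "x permutes S" and yp: "y permutes S"
    and xx: "\<And>u. u \<in> S \<Longrightarrow> x (x u) = u"
    and yyy: "\<And>u. u \<in> S \<Longrightarrow> y (y (y u)) = u"
    and O1S: "O1 \<subseteq> S"
    and K: "\<And>u. u \<in> S \<Longrightarrow> y (x u) \<in> O1 \<longleftrightarrow> u \<in> O1"
begin

lemma xS[simp]: "u \<in> S \<Longrightarrow> x u \<in> S" using xp by (simp add: permutes_in_image)
lemma yS[simp]: "u \<in> S \<Longrightarrow> y u \<in> S" using yp by (simp add: permutes_in_image)

lemma orb_y: assumes "u \<in> S" shows "cvert y u = {u, y u, y (y u)}"
proof
  have "(y ^^ 3) u = u" using yyy[OF assms] by (simp add: numeral_3_eq_3)
  then have m: "(y ^^ n) u = (y ^^ (n mod 3)) u" for n by (simp add: funpow_mod_eq)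
  show "cvert y u \<subseteq> {u, y u, y (y u)}"
  proof
    fix z assume "z \<in> cvert y u"
    then obtain n where z: "z = (y ^^ n) u" by (auto simp: cvert_def orb_def)
    have "n mod 3 < 3" by simp
    then consider "n mod 3 = 0" | "n mod 3 = 1" | "n mod 3 = 2" by linarith
    then show "z \<in> {u, y u, y (y u)}" using m[of n] z by cases (auto simp: numeral_2_eq_2)
  qed
next
  show "{u, y u, y (y u)} \<subseteq> cvert y u"
  proof -
    have "u = (y^^0) u" "y u = (y^^1) u" "y (y u) = (y^^2) u" by (simp_all add: numeral_2_eq_2)
    then show ?thesis unfolding cvert_def orb_def by blast
  qed
qed

lemma cvert_eq: assumes "u \<in> S" "v \<in> cvert y u" shows "cvert y v = cvert y u"
  using assms orb_y yyy by auto

definition D1 where "D1 = {d \<in> S. d \<in> O1 \<and> y d \<notin> O1}"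

lemma uniq_gen:
  assumes "P d" "\<not> P (y d)" "P d'" "\<not> P (y d')" "d' \<in> {d, y d, y (y d)}" "y (y (y d)) = d"
  shows "d = d'"
  using assms by auto

lemma uniq1: assumes "d \<in> D1" "d' \<in> D1" "cvert y d = cvert y d'" shows "d = d'"
proof -
  have "d' \<in> cvert y d" using assms orb_y[of d'] unfolding D1_def by auto
  then show ?thesis using assms orb_y[of d] yyy[of d] uniq_gen[of "\<lambda>z. z \<in> O1" d d']
    unfolding D1_def by auto
qed

lemma uniq2: assumes "e \<in> S" "e' \<in> S" "e \<notin> O1" "y e \<in> O1" "e' \<notin> O1" "y e' \<in> O1"
  "cvert y e = cvert y e'" shows "e = e'"
proof -
  have "e' \<in> cvert y e" using assms orb_y[of e'] by auto
  then show ?thesis using assms orb_y[of e] yyy[of e] uniq_gen[of "\<lambda>z. z \<notin> O1" e e']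
    by auto
qed

lemma D1_x: assumes "d \<in> D1" shows "x d \<in> S" "x d \<notin> O1" "y (x d) \<in> O1" "x d \<noteq> d"
proof -
  have d: "d \<in> S" "d \<in> O1" "y d \<notin> O1" using assms unfolding D1_def by auto
  show "x d \<in> S" using d by simp
  show "x d \<notin> O1" using K[of "x d"] d xx by auto
  show "y (x d) \<in> O1" using K[of d] d by auto
  show "x d \<noteq> d" using \<open>x d \<notin> O1\<close> d by auto
qed

definition tau where
  "tau d = (if d \<in> D1 then (if y (y (x d)) \<notin> O1 then y (x d) else y (y (x d))) else d)"

lemma tau_D1: assumes "d \<in> D1" shows "tau d \<in> D1" "cvert y (tau d) = cvert y (x d)"
proof -
  note e = D1_x[OF assms]
  show "tau d \<in> D1" using e assms yyy[of "x d"] unfolding tau_def D1_def by auto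
  show "cvert y (tau d) = cvert y (x d)"
    using e assms by (intro cvert_eq) (auto simp: tau_def orb_y)
qed

lemma tau_inj: "inj_on tau D1"
proof (rule inj_onI)
  fix d d' assume a: "d \<in> D1" "d' \<in> D1" "tau d = tau d'"
  then have "cvert y (x d) = cvert y (x d')" using tau_D1 by metis
  then have "x d = x d'" using uniq2 D1_x[OF a(1)] D1_x[OF a(2)] by blast
  then show "d = d'" using xx a unfolding D1_def by (metis (no_types, lifting) mem_Collect_eq)
qed

lemma tau_perm: "tau permutes D1"
proof (rule bij_imp_permutes)
  have f: "finite D1" using fin unfolding D1_def by auto
  have "tau ` D1 = D1" using endo_inj_surj[OF f _ tau_inj] tau_D1 by blast
  then show "bij_betw tau D1 D1" using tau_inj by (simp add: bij_betw_def)
  show "\<And>z. z \<notin> D1 \<Longrightarrow> tau z = z" by (simp add: tau_def)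
qed

lemma tau_permutation: "permutation tau"
proof -
  have "finite D1" using fin unfolding D1_def by auto
  then show ?thesis using tau_perm by (auto simp: permutation_permutes)
qed


definition per where "per d = funpow_dist1 tau d d"

definition circ where
  "circ d = (map (\<lambda>i. cvert y ((tau ^^ i) d)) [0..<per d],
             map (\<lambda>i. {(tau ^^ i) d, x ((tau ^^ i) d)}) [0..<per d])"

definition rep where "rep d = (SOME r. r \<in> orbit tau d)"

lemma self_orb: "d \<in> orbit tau d"
  using tau_permutation by (rule permutation_self_in_orbit)

lemma orbit_D1: "d \<in> D1 \<Longrightarrow> orbit tau d \<subseteq> D1"
  using permutes_orbit_subset[OF tau_perm] by blast

lemma funpow_D1: "d \<in> D1 \<Longrightarrow> (tau ^^ i) d \<in> D1"
  using orbit_D1 funpow_in_orbit[OF self_orb] by blast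

lemma orbit_conv: "orbit tau d = (\<lambda>n. (tau ^^ n) d) ` {0..<per d}"
  unfolding per_def by (rule orbit_conv_funpow_dist1[OF self_orb])

lemma tau_per: "(tau ^^ per d) d = d"
  unfolding per_def by (rule funpow_dist1_prop[OF self_orb])

lemma inj_pow: "inj_on (\<lambda>n. (tau ^^ n) d) {0..<per d}"
  unfolding per_def by (rule inj_on_funpow_dist1[OF self_orb])

lemma orbit_eq: "r \<in> orbit tau d \<Longrightarrow> orbit tau r = orbit tau d"
  by (rule orbit_cyclic_eq3[OF cyclic_on_orbit'[OF tau_permutation]])

lemma edge_inj: assumes "a \<in> D1" "b \<in> D1" "{a, x a} = {b, x b}" shows "a = b"
proof -
  have "a \<in> O1" "b \<in> O1" using assms unfolding D1_def by auto
  moreover have "x a \<notin> O1" "x b \<notin> O1" using D1_x assms by auto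
  ultimately show ?thesis using assms(3) by (metis doubleton_eq_iff)
qed

lemma circ_simple: assumes "d \<in> D1" shows "simple_circuit x y (circ d)"
proof -
  have p: "per d \<ge> 1" unfolding per_def by simp
  have dv: "distinct (map (\<lambda>i. cvert y ((tau ^^ i) d)) [0..<per d])"
  proof (simp add: distinct_map, rule inj_onI)
    fix i j assume "i \<in> {0..<per d}" "j \<in> {0..<per d}" "cvert y ((tau ^^ i) d) = cvert y ((tau ^^ j) d)"
    then show "i = j" using uniq1[OF funpow_D1 funpow_D1] assms inj_pow[of d]
      by (metis (no_types, lifting) inj_onD)
  qed
  have de: "distinct (map (\<lambda>i. {(tau ^^ i) d, x ((tau ^^ i) d)}) [0..<per d])"
  proof (simp add: distinct_map, rule inj_onI)
    fix i j assume "i \<in> {0..<per d}" "j \<in> {0..<per d}"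
      "{(tau ^^ i) d, x ((tau ^^ i) d)} = {(tau ^^ j) d, x ((tau ^^ j) d)}"
    then show "i = j" using edge_inj[OF funpow_D1 funpow_D1] assms inj_pow[of d]
      by (metis (no_types, lifting) inj_onD)
  qed
  have jn: "joins x y {(tau ^^ i) d, x ((tau ^^ i) d)} (cvert y ((tau ^^ i) d))
      (cvert y ((tau ^^ (Suc i mod per d)) d))" if "i < per d" for i
  proof -
    define t where "t = (tau ^^ i) d"
    have t: "t \<in> D1" using funpow_D1[OF assms] t_def by simp
    have "(tau ^^ (Suc i mod per d)) d = (tau ^^ Suc i) d"
      by (rule funpow_mod_eq[OF tau_per])
    also have "\<dots> = tau t" by (simp add: t_def)
    finally have "cvert y ((tau ^^ (Suc i mod per d)) d) = cvert y (x t)"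
      using tau_D1[OF t] by simp
    then show ?thesis unfolding joins_def t_def[symmetric] using D1_x[OF t] by blast
  qed
  show ?thesis unfolding simple_circuit_def circ_def using p dv de jn by auto
qed

lemma circ_v: "set (fst (circ d)) = cvert y ` orbit tau d"
  unfolding circ_def orbit_conv by auto

lemma circ_e: "set (snd (circ d)) = (\<lambda>a. {a, x a}) ` orbit tau d"
  unfolding circ_def orbit_conv by auto

lemma rep_in: "rep d \<in> orbit tau d"
  unfolding rep_def using self_orb by (rule someI)

lemma rep_eq: "orbit tau d = orbit tau d' \<Longrightarrow> rep d = rep d'"
  unfolding rep_def by simp

lemma main_dsc: "disjoint_simple_circuits x y (cvert y ` D1) ((\<lambda>a. {a, x a}) ` D1)"
proof -
  define C where "C = {circ d | d. d \<in> D1 \<and> rep d = d}"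
  have cov: "\<exists>r. r \<in> D1 \<and> rep r = r \<and> a \<in> orbit tau r" if "a \<in> D1" for a
  proof -
    have r: "rep a \<in> orbit tau a" by (rule rep_in)
    then have o: "orbit tau (rep a) = orbit tau a" by (rule orbit_eq)
    then have "rep (rep a) = rep a" by (rule rep_eq)
    moreover have "rep a \<in> D1" using r orbit_D1[OF that] by blast
    moreover have "a \<in> orbit tau (rep a)" using o self_orb by simp
    ultimately show ?thesis by blast
  qed
  have "\<forall>c\<in>C. simple_circuit x y c" unfolding C_def using circ_simple by blast
  moreover have "\<forall>c\<in>C. \<forall>c'\<in>C. c \<noteq> c' \<longrightarrow> set (fst c) \<inter> set (fst c') = {}"
  proof (intro ballI impI)
    fix c c' assume "c \<in> C" "c' \<in> C" "c \<noteq> c'"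
    then obtain d d' where dd: "c = circ d" "c' = circ d'" "d \<in> D1" "d' \<in> D1" "rep d = d" "rep d' = d'"
      unfolding C_def by blast
    show "set (fst c) \<inter> set (fst c') = {}"
    proof (rule ccontr)
      assume "set (fst c) \<inter> set (fst c') \<noteq> {}"
      then obtain a b where ab: "a \<in> orbit tau d" "b \<in> orbit tau d'" "cvert y a = cvert y b"
        unfolding dd circ_v by blast
      have "a \<in> D1" "b \<in> D1" using ab orbit_D1 dd by blast+
      then have "a = b" using uniq1 ab by blast
      then have "orbit tau d = orbit tau d'" using orbit_eq ab by metis
      then have "d = d'" using rep_eq dd by metis
      then show False using dd \<open>c \<noteq> c'\<close> by simp
    qed
  qed
  moreover have "(\<Union>c\<in>C. set (fst c)) = cvert y ` D1"
  proof
    show "(\<Union>c\<in>C. set (fst c)) \<subseteq> cvert y ` D1"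
      unfolding C_def using circ_v orbit_D1 by fastforce
    show "cvert y ` D1 \<subseteq> (\<Union>c\<in>C. set (fst c))"
    proof
      fix V assume "V \<in> cvert y ` D1"
      then obtain a where a: "a \<in> D1" "V = cvert y a" by blast
      then obtain r where "r \<in> D1" "rep r = r" "a \<in> orbit tau r" using cov by blast
      then show "V \<in> (\<Union>c\<in>C. set (fst c))" unfolding C_def using a circ_v by blast
    qed
  qed
  moreover have "(\<Union>c\<in>C. set (snd c)) = (\<lambda>a. {a, x a}) ` D1"
  proof
    show "(\<Union>c\<in>C. set (snd c)) \<subseteq> (\<lambda>a. {a, x a}) ` D1"
      unfolding C_def using circ_e orbit_D1 by fastforce
    show "(\<lambda>a. {a, x a}) ` D1 \<subseteq> (\<Union>c\<in>C. set (snd c))"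
    proof
      fix V assume "V \<in> (\<lambda>a. {a, x a}) ` D1"
      then obtain a where a: "a \<in> D1" "V = {a, x a}" by blast
      then obtain r where "r \<in> D1" "rep r = r" "a \<in> orbit tau r" using cov by blast
      then show "V \<in> (\<Union>c\<in>C. set (snd c))" unfolding C_def using a circ_e by blast
    qed
  qed
  ultimately show ?thesis unfolding disjoint_simple_circuits_def by blast
qed


lemma mixed: assumes "p \<in> S" "p \<in> O1" "q \<in> cvert y p" "q \<notin> O1"
  shows "\<exists>d\<in>D1. cvert y d = cvert y p"
proof -
  have q: "q \<in> {p, y p, y (y p)}" using assms orb_y by auto
  show ?thesis
  proof (cases "y p \<in> O1")
    case False then show ?thesis using assms unfolding D1_def by auto
  next
    case True
    then have "y (y p) \<notin> O1" using q assms by auto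
    then have "y p \<in> D1" using True assms unfolding D1_def by auto
    moreover have "cvert y (y p) = cvert y p" using assms by (intro cvert_eq) (auto simp: orb_y)
    ultimately show ?thesis by blast
  qed
qed

lemma common_e: "common_edges x O1 (S - O1) = (\<lambda>a. {a, x a}) ` D1"
proof
  show "(\<lambda>a. {a, x a}) ` D1 \<subseteq> common_edges x O1 (S - O1)"
  proof
    fix e assume "e \<in> (\<lambda>a. {a, x a}) ` D1"
    then obtain a where a: "a \<in> D1" "e = {a, x a}" by blast
    note ax = D1_x[OF a(1)]
    have aS: "a \<in> S" "a \<in> O1" using a unfolding D1_def by auto
    have "e \<in> face_edges x O1" unfolding face_edges_def using a ax aS by blast
    moreover have "e = {x a, x (x a)}" "x (x a) \<noteq> x a" using a ax aS xx by auto
    then have "e \<in> face_edges x (S - O1)" unfolding face_edges_def using ax by blast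
    ultimately show "e \<in> common_edges x O1 (S - O1)" unfolding common_edges_def by blast
  qed
  show "common_edges x O1 (S - O1) \<subseteq> (\<lambda>a. {a, x a}) ` D1"
  proof
    fix e assume "e \<in> common_edges x O1 (S - O1)"
    then obtain u v where uv: "e = {u, x u}" "u \<in> O1" "x u \<noteq> u" "e = {v, x v}" "v \<in> S" "v \<notin> O1"
      unfolding common_edges_def face_edges_def by blast
    have uS: "u \<in> S" using uv O1S by auto
    have "u = x v" using uv by (metis doubleton_eq_iff)
    then have "x u = v" using xx uv by simp
    have "y u \<notin> O1" using K[of v] uv \<open>u = x v\<close> by simp
    then have "u \<in> D1" unfolding D1_def using uS uv by auto
    then show "e \<in> (\<lambda>a. {a, x a}) ` D1" using uv by blast
  qed
qed

lemma fv_pt: assumes "V \<in> face_vertices x y A" "A \<subseteq> S" "\<And>u. u \<in> S \<Longrightarrow> y (x u) \<in> A \<longleftrightarrow> u \<in> A"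
  shows "\<exists>w\<in>S. V = cvert y w \<and> (\<exists>p \<in> A. p \<in> V)"
proof -
  obtain w where w: "V = cvert y w" "w \<in> A \<or> w \<in> x ` A" using assms(1) unfolding face_vertices_def by blast
  show ?thesis
  proof (cases "w \<in> A")
    case True then show ?thesis using w assms orb_y by blast
  next
    case False
    then obtain u where u: "u \<in> A" "w = x u" using w by blast
    then have "y w \<in> A" "w \<in> S" using assms by auto
    then show ?thesis using w orb_y by blast
  qed
qed

lemma common_v: "common_vertices x y O1 (S - O1) = cvert y ` D1"
proof
  show "cvert y ` D1 \<subseteq> common_vertices x y O1 (S - O1)"
  proof
    fix V assume "V \<in> cvert y ` D1"
    then obtain a where a: "a \<in> D1" "V = cvert y a" by blast
    have aS: "a \<in> S" "a \<in> O1" "y a \<notin> O1" using a unfolding D1_def by auto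
    have "V = cvert y (y a)" using a aS by (metis cvert_eq insertCI orb_y yS)
    then show "V \<in> common_vertices x y O1 (S - O1)"
      unfolding common_vertices_def face_vertices_def using a aS by auto
  qed
  show "common_vertices x y O1 (S - O1) \<subseteq> cvert y ` D1"
  proof
    fix V assume V: "V \<in> common_vertices x y O1 (S - O1)"
    have K2: "y (x u) \<in> S - O1 \<longleftrightarrow> u \<in> S - O1" if "u \<in> S" for u using K[OF that] that by auto
    obtain w1 p where w1: "w1 \<in> S" "V = cvert y w1" "p \<in> O1" "p \<in> V"
      using fv_pt[of V O1] V O1S K unfolding common_vertices_def by blast
    obtain q where q: "q \<in> S - O1" "q \<in> V"
      using fv_pt[of V "S - O1"] V K2 unfolding common_vertices_def by blast
    have pS: "p \<in> S" using w1 O1S by auto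
    have Vp: "V = cvert y p" using w1 cvert_eq by metis
    then obtain d where "d \<in> D1" "cvert y d = V" using mixed[OF pS w1(3), of q] q by auto
    then show "V \<in> cvert y ` D1" by blast
  qed
qed


lemma jan_dsc: "disjoint_simple_circuits x y (common_vertices x y O1 (S - O1)) (common_edges x O1 (S - O1))"
  using main_dsc common_v common_e by simp

end

lemma pow_S: assumes "\<And>u. u \<in> S \<Longrightarrow> f u \<in> S" "u \<in> S" shows "(f ^^ n) u \<in> S"
  using assms by (induction n) auto

lemma pow_mult_id: assumes "\<And>u. u \<in> S \<Longrightarrow> f u \<in> S" "\<forall>u\<in>S. (f ^^ l) u = u" "u \<in> S"
  shows "(f ^^ (l * k)) u = u"
proof (induction k)
  case (Suc k)
  have "(f ^^ (l * Suc k)) u = (f ^^ l) ((f ^^ (l * k)) u)" by (simp add: funpow_add)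
  then show ?case using Suc assms by simp
qed simp

lemma orb_sub: assumes "w \<in> orb f u" shows "orb f w \<subseteq> orb f u"
proof
  fix z assume "z \<in> orb f w"
  then obtain m where "z = (f ^^ m) w" unfolding orb_def by blast
  moreover obtain n where "w = (f ^^ n) u" using assms unfolding orb_def by blast
  ultimately have "z = (f ^^ (m + n)) u" by (simp add: funpow_add)
  then show "z \<in> orb f u" unfolding orb_def by blast
qed

lemma orb_eq: assumes "\<And>u. u \<in> S \<Longrightarrow> f u \<in> S" "l \<ge> 1" "\<forall>u\<in>S. (f ^^ l) u = u" "u \<in> S"
  "w \<in> orb f u" shows "orb f w = orb f u"
proof
  show "orb f w \<subseteq> orb f u" using assms(5) by (rule orb_sub)
  obtain n where n: "w = (f ^^ n) u" using assms unfolding orb_def by blast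
  have "n \<le> l * n" using assms(2) by simp
  have "(f ^^ (l * n - n)) w = (f ^^ (l * n - n + n)) u" using n by (simp add: funpow_add)
  also have "l * n - n + n = l * n" using \<open>n \<le> l * n\<close> by simp
  finally have "(f ^^ (l * n - n)) w = (f ^^ (l * n)) u" .
  also have "\<dots> = u" using pow_mult_id assms by metis
  finally have "u \<in> orb f w" unfolding orb_def by blast
  then show "orb f u \<subseteq> orb f w" by (rule orb_sub)
qed

lemma self_orb': "u \<in> orb f u"
  unfolding orb_def by (auto intro: exI[of _ 0])

theorem theorem1:
  fixes S :: "'a set" and x y :: "'a \<Rightarrow> 'a"
  assumes "januarial3 S x y"
  shows "simple_type S x y"
  unfolding simple_type_def
proof (intro allI impI)
  fix O1 O2 assume A: "O1 \<noteq> O2 \<and> xy_orbits S x y = {O1, O2}"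
  have T: "triangle_action S x y" using assms unfolding januarial3_def by blast
  then have fin: "finite S" and xp: "x permutes S" and yp: "y permutes S"
    and xx: "\<And>u. u \<in> S \<Longrightarrow> x (x u) = u" and yyy: "\<And>u. u \<in> S \<Longrightarrow> y (y (y u)) = u"
    unfolding triangle_action_def by auto
  obtain l where l: "l \<ge> 1" "\<forall>u\<in>S. ((y \<circ> x) ^^ l) u = u" using T unfolding triangle_action_def by blast
  have cl: "(y \<circ> x) u \<in> S" if "u \<in> S" for u
    using that xp yp by (simp add: permutes_in_image)
  have oe: "orb (y \<circ> x) w = orb (y \<circ> x) u" if "u \<in> S" "w \<in> orb (y \<circ> x) u" for u w
    using orb_eq[of S "y \<circ> x", OF cl l(1) l(2) that] by blast
  have osub: "orb (y \<circ> x) u \<subseteq> S" if "u \<in> S" for u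
    using pow_S[of S "y \<circ> x", OF cl that] unfolding orb_def by blast
  obtain u1 where u1: "u1 \<in> S" "O1 = orb (y \<circ> x) u1" using A unfolding xy_orbits_def by (metis imageE insertI1)
  obtain u2 where u2: "u2 \<in> S" "O2 = orb (y \<circ> x) u2" using A unfolding xy_orbits_def by (metis imageE insertI1 insert_commute)
  have O1S: "O1 \<subseteq> S" using u1 osub by blast
  have disj: "O1 \<inter> O2 = {}"
  proof (rule ccontr)
    assume "O1 \<inter> O2 \<noteq> {}"
    then obtain z where "z \<in> O1" "z \<in> O2" by blast
    then show False using oe u1 u2 A by metis
  qed
  have un: "O1 \<union> O2 = S"
  proof
    show "O1 \<union> O2 \<subseteq> S" using u1 u2 osub by blast
    show "S \<subseteq> O1 \<union> O2"
    proof
      fix z assume "z \<in> S"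
      then have "orb (y \<circ> x) z \<in> {O1, O2}" using A unfolding xy_orbits_def by blast
      then show "z \<in> O1 \<union> O2" using self_orb'[of z] by blast
    qed
  qed
  have O2: "O2 = S - O1" using disj un by blast
  have K: "y (x u) \<in> O1 \<longleftrightarrow> u \<in> O1" if "u \<in> S" for u
  proof -
    have s: "(y \<circ> x) u \<in> orb (y \<circ> x) u" unfolding orb_def by (auto intro: exI[of _ 1])
    then have e: "orb (y \<circ> x) ((y \<circ> x) u) = orb (y \<circ> x) u" using oe that by blast
    show ?thesis
    proof
      assume "y (x u) \<in> O1"
      then have "orb (y \<circ> x) (y (x u)) = O1" using oe u1 by metis
      then show "u \<in> O1" using e self_orb'[of u] by simp
    next
      assume "u \<in> O1"
      then have "orb (y \<circ> x) u = O1" using oe u1 by metis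
      then show "y (x u) \<in> O1" using s by simp
    qed
  qed
  interpret jan S x y O1 using fin xp yp xx yyy O1S K by unfold_locales auto
  show "disjoint_simple_circuits x y (common_vertices x y O1 O2) (common_edges x O1 O2)"
    using jan_dsc O2 by simp
qed

end
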